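(* Let $p,q$ be coprime odd integers with $p>|q|>0$, and let $S(p,q)$ be the corresponding 2-bridge knot. Let $S_0(S(p,q))$ be the subset of the $SL(2,\mathbb{C})$-character variety $X(\pi_1(E_{S(p,q)}))$ consisting of characters $\chi_\rho$ with $\chi_\rho(\mu)=\operatorname{trace}(\rho(\mu))=0$, where $\mu$ is a meridian. Then $S_0(S(p,q))$ is a finite set consisting of exactly the characters of metabelian representations: namely the single character of an abelian (reducible) representation together with the $\frac{p-1}{2}$ distinct characters of irreducible metabelian representations.
   Context: $E_K$ is the exterior of a knot $K$ in $S^3$ and $\pi_1(E_K)$ its knot group. For coprime odd integers $p,q$ with $p>|q|>0$, the 2-bridge knot $S(p,q)$ (Schubert notation) has knot group $\langle x_1,x_2\mid wx_1=x_2w\rangle$ with $w=x_1^{e_1}x_2^{e_2}x_1^{e_3}\cdots x_2^{e_{p-1}}$, $e_i=(-1)^{\lfloor iq/p\rfloor}$, where $x_1,x_2$ are meridians. For a finitely presented group $G$, the $SL(2,\mathbb{C})$-character variety $X(G)$ is the set of characters $\chi_\rho(g)=\operatorname{trace}(\rho(g))$ of representations $\rho:G\to SL(2,\mathbb{C})$ (in the sense of Culler–Shalen), an affine algebraic variety. A representation $\rho$ is metabelian if $\rho([G,G])$ is abelian. *)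

theory Defs
  imports "HOL-Analysis.Analysis"
begin

type_synonym cmat = "complex^2^2"

definition SL2 :: "cmat set" where
  "SL2 = {A. det A = 1}"

text \<open>Inverse of a 2x2 matrix of determinant 1 (the adjugate).\<close>
definition sl2_inv :: "cmat \<Rightarrow> cmat" where
  "sl2_inv A = (\<chi> i j. if i = j then A $ (if i = 1 then 2 else 1) $ (if i = 1 then 2 else 1)
                        else - (A $ i $ j))"

text \<open>Words in the free group on x1, x2: a letter (g, e) denotes x1 if g = False,
  x2 if g = True, raised to the power -1 if e = True and +1 otherwise.\<close>
type_synonym word = "(bool \<times> bool) list"

definition letter_mat :: "cmat \<Rightarrow> cmat \<Rightarrow> bool \<times> bool \<Rightarrow> cmat" where
  "letter_mat X1 X2 l = (let M = (if fst l then X2 else X1) in if snd l then sl2_inv M else M)"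

definition word_eval :: "cmat \<Rightarrow> cmat \<Rightarrow> word \<Rightarrow> cmat" where
  "word_eval X1 X2 u = foldr (\<lambda>l M. letter_mat X1 X2 l ** M) u (mat 1)"

text \<open>The word w = x1^e1 x2^e2 x1^e3 ... x2^e(p-1), e_i = (-1)^floor(iq/p).\<close>
definition rel_word :: "int \<Rightarrow> int \<Rightarrow> word" where
  "rel_word p q = map (\<lambda>i. (even i, odd ((i * q) div p))) [1..p-1]"

text \<open>A representation of the knot group of S(p,q) into SL(2,C) is determined by
  the images X1, X2 of the generators x1, x2, subject to the relation w x1 = x2 w.\<close>
definition is_rep :: "int \<Rightarrow> int \<Rightarrow> cmat \<Rightarrow> cmat \<Rightarrow> bool" where
  "is_rep p q X1 X2 \<longleftrightarrow> X1 \<in> SL2 \<and> X2 \<in> SL2 \<and>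
     word_eval X1 X2 (rel_word p q) ** X1 = X2 ** word_eval X1 X2 (rel_word p q)"

definition rep_image :: "cmat \<Rightarrow> cmat \<Rightarrow> cmat set" where
  "rep_image X1 X2 = range (word_eval X1 X2)"

definition character :: "cmat \<Rightarrow> cmat \<Rightarrow> word \<Rightarrow> complex" where
  "character X1 X2 = (\<lambda>u. trace (word_eval X1 X2 u))"

definition comm :: "cmat \<Rightarrow> cmat \<Rightarrow> cmat" where
  "comm a b = a ** b ** sl2_inv a ** sl2_inv b"

definition abelian_rep :: "cmat \<Rightarrow> cmat \<Rightarrow> bool" where
  "abelian_rep X1 X2 \<longleftrightarrow> (\<forall>a\<in>rep_image X1 X2. \<forall>b\<in>rep_image X1 X2. a ** b = b ** a)"

text \<open>Metabelian: rho([G,G]) = [rho(G), rho(G)] is abelian, i.e. all commutators of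
  elements of rho(G) (which generate it) commute with each other.\<close>
definition metabelian_rep :: "cmat \<Rightarrow> cmat \<Rightarrow> bool" where
  "metabelian_rep X1 X2 \<longleftrightarrow> (\<forall>a\<in>rep_image X1 X2. \<forall>b\<in>rep_image X1 X2.
      \<forall>c\<in>rep_image X1 X2. \<forall>d\<in>rep_image X1 X2. comm a b ** comm c d = comm c d ** comm a b)"

definition irreducible_rep :: "cmat \<Rightarrow> cmat \<Rightarrow> bool" where
  "irreducible_rep X1 X2 \<longleftrightarrow>
     \<not> (\<exists>v::complex^2. v \<noteq> 0 \<and> (\<forall>g\<in>rep_image X1 X2. \<exists>c. g *v v = c *s v))"

definition S0 :: "int \<Rightarrow> int \<Rightarrow> (word \<Rightarrow> complex) set" where
  "S0 p q = {character X1 X2 | X1 X2. is_rep p q X1 X2 \<and> trace X1 = 0}"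

end

theory Submission
  imports Defs
begin


definition mk :: "complex \<Rightarrow> complex \<Rightarrow> complex \<Rightarrow> complex \<Rightarrow> cmat" where
  "mk a b c d = (\<chi> i j. if i = 1 then (if j = 1 then a else b) else (if j = 1 then c else d))"

lemma two_ne: "(1::2) \<noteq> 2" "(2::2) \<noteq> 1" by auto

lemma mk_nth[simp]: "mk a b c d $ 1 $ 1 = a" "mk a b c d $ 1 $ 2 = b"
  "mk a b c d $ 2 $ 1 = c" "mk a b c d $ 2 $ 2 = d"
  by (auto simp: mk_def)

lemma cmat_mk: "(A::cmat) = mk (A$1$1) (A$1$2) (A$2$1) (A$2$2)"
  by (simp add: vec_eq_iff forall_2 mk_def)

lemma mk_eq[simp]: "mk a b c d = mk a' b' c' d' \<longleftrightarrow> a = a' \<and> b = b' \<and> c = c' \<and> d = d'"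
  by (auto simp: vec_eq_iff forall_2 mk_def)

lemma mk_mult[simp]: "mk a b c d ** mk a' b' c' d' = mk (a*a'+b*c') (a*b'+b*d') (c*a'+d*c') (c*b'+d*d')"
  by (simp add: vec_eq_iff forall_2 matrix_matrix_mult_def sum_2)

lemma mk_trace[simp]: "trace (mk a b c d) = a + d"
  by (simp add: trace_def sum_2)

lemma mk_det[simp]: "det (mk a b c d) = a * d - b * c"
  by (simp add: det_2)

lemma mk_inv[simp]: "sl2_inv (mk a b c d) = mk d (-b) (-c) a"
  by (simp add: vec_eq_iff forall_2 sl2_inv_def)

lemma mk_one: "mat 1 = mk 1 0 0 1"
  by (simp add: vec_eq_iff forall_2 mat_def)

lemma mk_neg[simp]: "- mk a b c d = mk (-a) (-b) (-c) (-d)"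
  by (simp add: vec_eq_iff forall_2)

lemma mk_add[simp]: "mk a b c d + mk a' b' c' d' = mk (a+a') (b+b') (c+c') (d+d')"
  by (simp add: vec_eq_iff forall_2)

lemma mk_mv[simp]: "mk a b c d *v v = (\<chi> i. if i = 1 then a * v$1 + b * v$2 else c * v$1 + d * v$2)"
  by (simp add: vec_eq_iff forall_2 matrix_vector_mult_def sum_2)


lemma mk_sub[simp]: "mk a b c d - mk a' b' c' d' = mk (a-a') (b-b') (c-c') (d-d')"
  by (simp add: vec_eq_iff forall_2)

lemma mk_zero: "0 = mk 0 0 0 0"
  by (simp add: vec_eq_iff forall_2 mk_def)

lemma mat_mk: "mat x = mk x 0 0 x"
  by (simp add: vec_eq_iff forall_2 mat_def)

lemma mk_cases: obtains a b c d where "A = mk a b c d"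
  using cmat_mk by blast

lemma neg_mult[simp]: "(- (A::cmat)) ** (B::cmat) = - (A ** B)" "(A::cmat) ** (- B) = - (A ** (B::cmat))"
  by (cases A rule: mk_cases; cases B rule: mk_cases; simp)+

lemma neg_neg_cmat[simp]: "- (- (A::cmat)) = A" by simp

lemma inv_right: "det (A::cmat) = 1 \<Longrightarrow> A ** sl2_inv A = mat 1"
  by (cases A rule: mk_cases) (simp add: mk_one algebra_simps)

lemma inv_left: "det (A::cmat) = 1 \<Longrightarrow> sl2_inv A ** A = mat 1"
  by (cases A rule: mk_cases) (simp add: mk_one algebra_simps)

lemma det_inv[simp]: "det (sl2_inv A) = det (A::cmat)"
  by (cases A rule: mk_cases) (simp add: algebra_simps)

lemma CH: "det (A::cmat) = 1 \<Longrightarrow> A ** A = mat (trace A) ** A - mat 1"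
  by (cases A rule: mk_cases) (simp add: mk_one mat_mk algebra_simps power2_eq_square)

lemma rdistrib_sub: "((A::cmat) - B) ** (C::cmat) = A ** C - B ** C"
  by (cases A rule: mk_cases; cases B rule: mk_cases; cases C rule: mk_cases; simp add: algebra_simps)

lemma trace_matmul: "trace (mat x ** (A::cmat)) = x * trace A"
  by (cases A rule: mk_cases) (simp add: mat_mk algebra_simps)

lemma trace_neg[simp]: "trace (- (A::cmat)) = - trace A"
  by (cases A rule: mk_cases) simp

fun mpow :: "cmat \<Rightarrow> nat \<Rightarrow> cmat" where
  "mpow A 0 = mat 1"
| "mpow A (Suc n) = A ** mpow A n"

lemma mpow_Suc': "mpow A (Suc n) = mpow A n ** A"
  by (induction n) (simp_all add: matrix_mul_assoc)

lemma mpow_add: "mpow A (m + n) = mpow A m ** mpow A n"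
  by (induction m) (simp_all add: matrix_mul_assoc)

lemma det_mpow: "det A = 1 \<Longrightarrow> det (mpow A n) = 1"
  by (induction n) (simp_all add: det_mul det_I)

fun cheb :: "complex \<Rightarrow> nat \<Rightarrow> complex" where
  "cheb t 0 = 2"
| "cheb t (Suc 0) = t"
| "cheb t (Suc (Suc n)) = t * cheb t (Suc n) - cheb t n"

lemma trace_mpow_aux: assumes "det A = 1" shows "t = trace A \<Longrightarrow> trace (mpow A n) = cheb t n"
proof (induction t n rule: cheb.induct)
  case (1 t) then show ?case by (simp add: mk_one)
next
  case (2 t) then show ?case by simp
next
  case (3 t n)
  have "mpow A (Suc (Suc n)) = (A ** A) ** mpow A n" by (simp add: matrix_mul_assoc)
  also have "\<dots> = mat (trace A) ** mpow A (Suc n) - mpow A n"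
    by (simp add: CH[OF assms] rdistrib_sub matrix_mul_assoc)
  finally show ?case using 3 by (simp add: trace_sub trace_matmul)
qed

lemma trace_mpow: "det A = 1 \<Longrightarrow> trace (mpow A n) = cheb (trace A) n"
  using trace_mpow_aux by blast

definition sg :: "bool \<Rightarrow> cmat \<Rightarrow> cmat" where "sg s M = (if s then - M else M)"

lemma sg_simps[simp]: "sg s M ** N = sg s (M ** N)" "M ** sg s N = sg s (M ** N)"
  "sg a (sg b M) = sg (a \<noteq> b) M" "sg False M = M" "trace (sg s M) = (if s then - trace M else trace M)"
  by (auto simp: sg_def)

locale tz =
  fixes X Y :: cmat
  assumes dX: "det X = 1" and dY: "det Y = 1" and tX: "trace X = 0" and tY: "trace Y = 0"
begin

definition "B = X ** Y"
definition "C = Y ** X"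

lemma tz_mat: "det (A::cmat) = 1 \<Longrightarrow> trace A = 0 \<Longrightarrow> A ** A = - mat 1 \<and> sl2_inv A = - A"
proof -
  assume h: "det A = 1" "trace A = 0"
  obtain a b c d where A: "A = mk a b c d" by (rule mk_cases)
  have d: "d = - a" using h A by (simp add: eq_neg_iff_add_eq_0 add.commute)
  have e1: "a * d - b * c = 1" using h A by simp
  have "- (a * a) = 1 + b * c" using e1 unfolding d by (simp add: algebra_simps)
  then have e: "a * a + b * c = -1" by (metis add_minus_cancel add.commute)
  have e': "c * b + d * d = -1" using e unfolding d by (simp add: algebra_simps)
  have "A ** A = mk (a*a+b*c) (a*b+b*d) (c*a+d*c) (c*b+d*d)" using A by simp
  also have "\<dots> = - mat 1" unfolding mk_one using e e' d by simp
  finally show ?thesis using A d by simp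
qed

lemma XX: "X ** X = - mat 1" using tz_mat dX tX by blast
lemma YY: "Y ** Y = - mat 1" using tz_mat dY tY by blast
lemma invX: "sl2_inv X = - X" using tz_mat dX tX by blast
lemma invY: "sl2_inv Y = - Y" using tz_mat dY tY by blast

lemma BC: "B ** C = mat 1"
proof -
  have "B ** C = X ** (Y ** Y) ** X" by (simp add: B_def C_def matrix_mul_assoc)
  then show ?thesis by (simp add: YY XX)
qed
lemma CB: "C ** B = mat 1"
proof -
  have "C ** B = Y ** (X ** X) ** Y" by (simp add: B_def C_def matrix_mul_assoc)
  then show ?thesis by (simp add: YY XX)
qed
lemma XB: "X ** B = - Y"
proof -
  have "X ** B = (X ** X) ** Y" unfolding B_def by (rule matrix_mul_assoc)
  then show ?thesis by (simp add: XX)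
qed
lemma CX: "C ** X = - Y"
proof -
  have "C ** X = Y ** (X ** X)" unfolding C_def by (rule matrix_mul_assoc[symmetric])
  then show ?thesis by (simp add: XX)
qed
lemma XC: "X ** C = B ** X" unfolding B_def C_def by (rule matrix_mul_assoc)
lemma dB: "det B = 1" by (simp add: B_def det_mul dX dY)
lemma dC: "det C = 1" by (simp add: C_def det_mul dX dY)
lemma trC: "trace C = trace B" unfolding B_def C_def by (rule trace_mul_sym)

lemma X_mpowB: "X ** mpow B n = mpow C n ** X"
proof (induction n)
  case (Suc n)
  have "X ** mpow B (Suc n) = (X ** B) ** mpow B n" by (simp add: matrix_mul_assoc)
  also have "\<dots> = C ** (X ** mpow B n)" by (simp add: XB CX[symmetric] matrix_mul_assoc)
  finally show ?case using Suc by (simp add: matrix_mul_assoc)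
qed simp

lemma X_mpowC: "X ** mpow C n = mpow B n ** X"
proof (induction n)
  case (Suc n)
  have "X ** mpow C (Suc n) = (X ** C) ** mpow C n" by (simp add: matrix_mul_assoc)
  also have "\<dots> = B ** (X ** mpow C n)" by (simp add: XC matrix_mul_assoc)
  finally show ?case using Suc by (simp add: matrix_mul_assoc)
qed simp

lemma BnCn: "mpow B n ** mpow C n = mat 1"
proof (induction n)
  case (Suc n)
  have "mpow B (Suc n) ** mpow C (Suc n) = B ** (mpow B n ** mpow C n) ** C"
    by (metis mpow.simps(2) mpow_Suc' matrix_mul_assoc)
  then show ?case using Suc by (simp add: BC)
qed simp

lemma CnBn: "mpow C n ** mpow B n = mat 1"
proof (induction n)
  case (Suc n)
  have "mpow C (Suc n) ** mpow B (Suc n) = C ** (mpow C n ** mpow B n) ** B"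
    by (metis mpow.simps(2) mpow_Suc' matrix_mul_assoc)
  then show ?case using Suc by (simp add: CB)
qed simp

definition Ez :: "int \<Rightarrow> cmat" where
  "Ez n = (if 0 \<le> n then mpow B (nat n) else mpow C (nat (- n)))"

lemma X_Ez: "X ** Ez n = Ez (- n) ** X"
  by (cases "n = 0") (auto simp: Ez_def X_mpowB X_mpowC)

lemma B_Ez: "B ** Ez n = Ez (n + 1)"
proof (cases "0 \<le> n")
  case True
  then have "nat (n+1) = Suc (nat n)" by simp
  then show ?thesis using True by (simp add: Ez_def)
next
  case False
  define m where "m = nat (- (n+1))"
  have m: "nat (- n) = Suc m" "nat (- (n+1)) = m" using False unfolding m_def by arith+
  have "B ** Ez n = (B ** C) ** mpow C m" using False m by (simp add: Ez_def matrix_mul_assoc)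
  then show ?thesis using False m by (auto simp: Ez_def BC)
qed

lemma Ez_inv: "Ez n ** Ez (- n) = mat 1"
  by (cases "n = 0") (auto simp: Ez_def BnCn CnBn)

lemma det_Ez: "det (Ez n) = 1"
  by (simp add: Ez_def det_mpow dB dC)

lemma trace_Ez: "trace (Ez n) = cheb (trace B) (nat \<bar>n\<bar>)"
  by (simp add: Ez_def trace_mpow dB dC trC)

lemma trace_EzX: "trace (Ez n ** X) = 0"
proof -
  define M where "M = Ez n ** X"
  have "M ** M = Ez n ** (X ** Ez n) ** X" by (simp add: M_def matrix_mul_assoc)
  also have "\<dots> = (Ez n ** Ez (-n)) ** (X ** X)" by (simp add: X_Ez matrix_mul_assoc)
  also have "\<dots> = - mat 1" by (simp add: XX Ez_inv)
  finally have MM: "M ** M = - mat 1" .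
  have dM: "det M = 1" by (simp add: M_def det_mul det_Ez dX)
  obtain a b c d where A: "M = mk a b c d" by (rule mk_cases)
  have e: "a * a + b * c = -1" "c * b + d * d = -1" "a * d - b * c = 1"
    using MM dM A by (simp_all add: mk_one)
  have "(a + d) * (a + d) = (a * a + b * c) + (c * b + d * d) + 2 * (a * d - b * c)"
    by (simp add: algebra_simps)
  also have "\<dots> = 0" using e by simp
  finally have "a + d = 0" by simp
  then show ?thesis unfolding M_def[symmetric] using A by simp
qed

end


fun nfstep :: "bool \<times> bool \<Rightarrow> bool \<times> int \<times> bool \<Rightarrow> bool \<times> int \<times> bool" where
  "nfstep (g, e) (s, n, h) = (if g then (if h then (s \<noteq> e, -n-1, False) else ((\<not>s) \<noteq> e, -n-1, True))
                                 else (if h then ((\<not>s) \<noteq> e, -n, False) else (s \<noteq> e, -n, True)))"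

definition nf :: "word \<Rightarrow> bool \<times> int \<times> bool" where
  "nf u = foldr nfstep u (False, 0, False)"

definition chf :: "complex \<Rightarrow> word \<Rightarrow> complex" where
  "chf t u = (case nf u of (s, n, h) \<Rightarrow> if h then 0 else (if s then - cheb t (nat \<bar>n\<bar>) else cheb t (nat \<bar>n\<bar>)))"

lemma nf_Nil[simp]: "nf [] = (False, 0, False)" by (simp add: nf_def)
lemma nf_Cons[simp]: "nf (l # u) = nfstep l (nf u)" by (simp add: nf_def)

lemma word_eval_Nil[simp]: "word_eval X1 X2 [] = mat 1" by (simp add: word_eval_def)
lemma word_eval_Cons[simp]: "word_eval X1 X2 (l # u) = letter_mat X1 X2 l ** word_eval X1 X2 u"
  by (simp add: word_eval_def)

lemma det_word: "det X1 = 1 \<Longrightarrow> det X2 = 1 \<Longrightarrow> det (word_eval X1 X2 u) = 1"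
  by (induction u) (auto simp: det_mul letter_mat_def Let_def)

fun alt :: "word \<Rightarrow> bool" where
  "alt [] = True"
| "alt ((g1, a) # (g2, b) # u) = ((\<not> g1) \<and> g2 \<and> alt u)"
| "alt [_] = False"

context tz
begin

definition val :: "bool \<times> int \<times> bool \<Rightarrow> cmat" where
  "val x = (case x of (s, n, h) \<Rightarrow> sg s (Ez n ** (if h then X else mat 1)))"

lemma Ez0: "Ez 0 = mat 1" by (simp add: Ez_def)

lemma L_X1: "X ** (Ez n ** X) = - Ez (-n)"
proof -
  have "X ** (Ez n ** X) = Ez (-n) ** (X ** X)" by (simp add: matrix_mul_assoc X_Ez)
  then show ?thesis by (simp add: XX)
qed

lemma YXB: "Y = - (X ** B)" by (simp add: XB)

lemma L_Y0: "Y ** Ez n = - (Ez (-n-1) ** X)"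
proof -
  have "Y ** Ez n = - (X ** (B ** Ez n))" by (subst YXB) (simp add: matrix_mul_assoc)
  also have "\<dots> = - (Ez (-n-1) ** X)" by (simp add: B_Ez X_Ez)
  finally show ?thesis .
qed

lemma L_Y1: "Y ** (Ez n ** X) = Ez (-n-1)"
proof -
  have "Y ** (Ez n ** X) = (Y ** Ez n) ** X" by (simp add: matrix_mul_assoc)
  also have "\<dots> = - (Ez (-n-1) ** (X ** X))" by (simp add: L_Y0 matrix_mul_assoc)
  finally show ?thesis by (simp add: XX)
qed

lemma letter_tz: "letter_mat X Y (g, e) = sg e (if g then Y else X)"
  by (simp add: letter_mat_def sg_def invX invY)

lemma word_val: "word_eval X Y u = val (nf u)"
proof (induction u)
  case Nil then show ?case by (simp add: val_def Ez0)
next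
  case (Cons l u)
  obtain g e where l: "l = (g, e)" by (cases l)
  obtain s n h where nfu: "nf u = (s, n, h)" by (cases "nf u")
  have IH: "word_eval X Y u = sg s (Ez n ** (if h then X else mat 1))" using Cons nfu by (simp add: val_def)
  have W: "word_eval X Y (l # u) = sg e (sg s ((if g then Y else X) ** (Ez n ** (if h then X else mat 1))))"
    using IH by (cases e; cases s) (simp_all add: l letter_tz)
  show ?case
  proof (cases g)
    case True
    show ?thesis
    proof (cases h)
      case True
      then show ?thesis using W \<open>g\<close> nfu l by (simp add: L_Y1 val_def) (cases e; cases s; simp)
    next
      case False
      then show ?thesis using W \<open>g\<close> nfu l by (simp add: L_Y0 val_def) (simp add: sg_def)
    qed
  next
    case False
    show ?thesis
    proof (cases h)
      case True
      then show ?thesis using W \<open>\<not> g\<close> nfu l by (simp add: L_X1 val_def) (simp add: sg_def)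
    next
      case False
      then show ?thesis using W \<open>\<not> g\<close> nfu l by (simp add: X_Ez val_def) (cases e; cases s; simp)
    qed
  qed
qed

lemma trace_val: "trace (val (nf u)) = chf (trace B) u"
proof -
  obtain s n h where nfu: "nf u = (s, n, h)" by (cases "nf u")
  show ?thesis using nfu by (cases h) (simp_all add: val_def chf_def trace_EzX trace_Ez)
qed

lemma char_chf: "character X Y = chf (trace (X ** Y))"
  by (rule ext) (simp add: character_def word_val trace_val B_def)

lemma alt_eval: "alt u \<Longrightarrow> \<exists>s. word_eval X Y u = sg s (mpow B (length u div 2))"
proof (induction u rule: alt.induct)
  case 1 show ?case by (rule exI[of _ False]) simp
next
  case (2 g1 a g2 b u)
  then obtain s where s: "word_eval X Y u = sg s (mpow B (length u div 2))" by auto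
  have g: "\<not> g1" "g2" using 2 by auto
  have "word_eval X Y ((g1, a) # (g2, b) # u) = sg a X ** (sg b Y ** sg s (mpow B (length u div 2)))"
    using g s by (simp add: letter_tz)
  also have "\<dots> = sg (a \<noteq> (b \<noteq> s)) (mpow B (Suc (length u div 2)))"
    by (cases a; cases b; cases s) (simp_all add: B_def matrix_mul_assoc)
  finally show ?case by auto
qed simp

end

lemma alt_upto: "odd a \<Longrightarrow> alt (map (\<lambda>i. (even i, f i)) [a..a + 2 * int m - 1])"
proof (induction m arbitrary: a)
  case 0 then show ?case by simp
next
  case (Suc m)
  have "[a..a + 2 * int (Suc m) - 1] = a # (a+1) # [a+2..(a+2) + 2 * int m - 1]"
    by (simp add: upto_rec1 algebra_simps)
  then show ?case using Suc.IH[of "a+2"] Suc.prems by simp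
qed

lemma rel_word_alt:
  assumes "odd p" "p \<ge> 1"
  shows "alt (rel_word p q) \<and> length (rel_word p q) div 2 = nat ((p - 1) div 2)"
proof -
  define k where "k = nat ((p - 1) div 2)"
  have k: "p = 2 * int k + 1" using assms unfolding k_def by (auto elim!: oddE)
  have "[1..p-1] = [1..1 + 2 * int k - 1]" using k by simp
  then show ?thesis unfolding rel_word_def using alt_upto[of 1 _ k] k by simp
qed


lemma is_rep_trace:
  assumes "is_rep p q X1 X2" shows "trace X2 = trace X1"
proof -
  define W where "W = word_eval X1 X2 (rel_word p q)"
  have d: "det X1 = 1" "det X2 = 1" using assms by (auto simp: is_rep_def SL2_def)
  have dW: "det W = 1" unfolding W_def using det_word d by blast
  have rel: "W ** X1 = X2 ** W" using assms by (simp add: is_rep_def W_def)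
  have "X2 = X2 ** (W ** sl2_inv W)" by (simp add: inv_right dW)
  also have "\<dots> = W ** (X1 ** sl2_inv W)" by (simp add: matrix_mul_assoc rel)
  finally have "trace X2 = trace ((X1 ** sl2_inv W) ** W)" by (metis trace_mul_sym)
  also have "\<dots> = trace X1" by (simp add: matrix_mul_assoc[symmetric] inv_left dW)
  finally show ?thesis .
qed

context tz
begin

lemma is_rep_iff:
  assumes "odd p" "p \<ge> 1"
  shows "is_rep p q X Y \<longleftrightarrow> mpow B (nat p) = - mat 1"
proof -
  define k where "k = nat ((p - 1) div 2)"
  have P: "nat p = Suc (k + k)" using assms unfolding k_def by (auto elim!: oddE)
  obtain s where s: "word_eval X Y (rel_word p q) = sg s (mpow B k)"
    using alt_eval rel_word_alt[OF assms, of q] unfolding k_def by metis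
  have "is_rep p q X Y \<longleftrightarrow> sg s (mpow B k ** X) = sg s (Y ** mpow B k)"
    using dX dY by (simp add: is_rep_def SL2_def s)
  also have "\<dots> \<longleftrightarrow> mpow B k ** X = Y ** mpow B k" by (cases s) (auto simp: sg_def)
  also have "\<dots> \<longleftrightarrow> mpow B (Suc (k + k)) = - mat 1"
  proof
    assume h: "mpow B k ** X = Y ** mpow B k"
    have "X ** (mpow B k ** X) = X ** (Y ** mpow B k)" using h by simp
    then have "(X ** mpow B k) ** X = B ** mpow B k" by (simp add: matrix_mul_assoc B_def)
    then have "mpow C k ** (X ** X) = mpow B (Suc k)" by (simp add: X_mpowB matrix_mul_assoc)
    then have e: "mpow B (Suc k) = - mpow C k" by (simp add: XX)
    have "mpow B (Suc (k + k)) = mpow B (k + Suc k)" by simp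
    also have "\<dots> = mpow B k ** mpow B (Suc k)" by (rule mpow_add)
    also have "\<dots> = mpow B k ** (- mpow C k)" by (simp only: e)
    also have "\<dots> = - mat 1" by (simp add: BnCn)
    finally show "mpow B (Suc (k + k)) = - mat 1" .
  next
    assume h: "mpow B (Suc (k + k)) = - mat 1"
    have "mpow B (Suc k) = mpow B (Suc k) ** (mpow B k ** mpow C k)" by (simp add: BnCn)
    also have "\<dots> = mpow B (Suc k + k) ** mpow C k" by (simp add: mpow_add matrix_mul_assoc)
    also have "\<dots> = - mpow C k" using h by simp
    finally have e: "mpow B (Suc k) = - mpow C k" .
    have "X ** (mpow B k ** X) = mpow C k ** (X ** X)" by (simp add: X_mpowB matrix_mul_assoc)
    also have "\<dots> = mpow B (Suc k)" using e by (simp add: XX)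
    also have "\<dots> = X ** (Y ** mpow B k)" by (simp add: B_def matrix_mul_assoc)
    finally have "X ** (X ** (mpow B k ** X)) = X ** (X ** (Y ** mpow B k))" by simp
    then show "mpow B k ** X = Y ** mpow B k" by (simp add: matrix_mul_assoc XX)
  qed
  finally show ?thesis using P by simp
qed

end

lemma cheb_root: "m * n = 1 \<Longrightarrow> t = m + n \<Longrightarrow> cheb t k = m ^ k + n ^ k"
proof (induction t k rule: cheb.induct)
  case (3 t k)
  then have "cheb t (Suc (Suc k)) = (m+n)*(m*m^k + n*n^k) - (m^k + n^k)" by simp
  also have "\<dots> = m*m*m^k + n*n*n^k + (m*n)*m^k + (m*n)*n^k - (m^k+n^k)" by (simp add: algebra_simps)
  also have "\<dots> = m^(Suc (Suc k)) + n^(Suc (Suc k))" using 3 by simp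
  finally show ?case .
qed simp_all

lemma trace_negI: "trace (- mat 1 :: cmat) = -2"
  by (simp add: mk_one)

lemma sq_aux: "x * y = (1::complex) \<Longrightarrow> x + y = -2 \<Longrightarrow> x = -1"
proof -
  assume h: "x * y = 1" "x + y = -2"
  have "(x + 1) * (x + 1) = x * (x + y + 2)" using h(1) by (simp add: algebra_simps)
  also have "\<dots> = 0" using h(2) by simp
  finally show "x = -1" by (metis add_eq_0_iff2 mult_eq_0_iff)
qed

lemma eig:
  assumes "det (A::cmat) = 1" "mpow A P = - mat 1" "odd P"
  shows "\<exists>l. l ^ P = 1 \<and> trace A = - (l + 1 / l)"
proof -
  define t where "t = trace A"
  define s where "s = csqrt (t^2 - 4)"
  have s2: "s * s = t * t - 4" unfolding s_def by (metis power2_csqrt power2_eq_square)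
  define m where "m = (t + s) / 2"
  define n where "n = (t - s) / 2"
  have "m * n = ((t + s) * (t - s)) / 4" unfolding m_def n_def by simp
  also have "(t + s) * (t - s) = t * t - s * s" by (simp add: algebra_simps)
  finally have mn: "m * n = 1" using s2 by simp
  have tmn: "t = m + n" unfolding m_def n_def by (simp add: field_simps)
  have "cheb t P = -2" using assms trace_mpow[of A P] trace_negI by (simp add: t_def)
  then have e: "m ^ P + n ^ P = -2" using cheb_root[OF mn tmn] by simp
  have mnP: "m ^ P * n ^ P = 1" using mn by (metis power_mult_distrib power_one)
  have mP: "m ^ P = -1" using sq_aux[OF mnP e] .
  have m0: "m \<noteq> 0" using mn by auto
  have r1: "(- m) ^ P = 1" using mP assms(3) by (simp add: power_minus_odd)
  have "n = 1 / m" using mn m0 by (simp add: eq_divide_eq mult.commute)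
  then have r2: "- (- m + 1 / (- m)) = t" using tmn by simp
  show ?thesis using r1 r2[symmetric] unfolding t_def by blast
qed

definition X0 :: cmat where "X0 = mk 0 1 (-1) 0"
definition Yl :: "complex \<Rightarrow> cmat" where "Yl l = mk 0 l (- (1/l)) 0"

lemma tz_can: "l \<noteq> 0 \<Longrightarrow> tz X0 (Yl l)"
  by unfold_locales (simp_all add: X0_def Yl_def)

lemma tr_can: "trace (X0 ** Yl l) = - (l + 1 / l)"
  by (simp add: X0_def Yl_def)

lemma mpow_diag: "mpow (mk a 0 0 d) n = mk (a ^ n) 0 0 (d ^ n)"
  by (induction n) (simp_all add: mk_one)

lemma rep_can:
  assumes "odd p" "p \<ge> 1" "l ^ nat p = 1"
  shows "is_rep p q X0 (Yl l)"
proof -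
  have l0: "l \<noteq> 0"
  proof
    assume "l = 0"
    moreover have "nat p \<noteq> 0" using assms(2) by simp
    ultimately show False using assms(3) by (simp add: power_0_left)
  qed
  interpret tz X0 "Yl l" using tz_can[OF l0] .
  have oP: "odd (nat p)" using assms by (simp add: even_nat_iff)
  have "B = mk (- (1/l)) 0 0 (- l)" unfolding B_def by (simp add: X0_def Yl_def)
  then have "mpow B (nat p) = mk ((- (1/l)) ^ nat p) 0 0 ((- l) ^ nat p)" by (simp add: mpow_diag)
  also have "\<dots> = - mat 1" using oP assms(3) by (simp add: power_minus_odd mk_one power_one_over)
  finally show ?thesis using is_rep_iff[OF assms(1,2)] by simp
qed


definition lam :: "nat \<Rightarrow> nat \<Rightarrow> complex" where
  "lam P j = cis (2 * pi * real j / real P)"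

definition tj :: "nat \<Rightarrow> nat \<Rightarrow> complex" where
  "tj P j = - complex_of_real (2 * cos (2 * pi * real j / real P))"

lemma cis_plus_inv: "cis x + 1 / cis x = complex_of_real (2 * cos x)"
  by (simp add: complex_eq_iff divide_inverse cis_inverse)

lemma lam_tr: "- (lam P j + 1 / lam P j) = tj P j"
  unfolding lam_def tj_def by (simp only: cis_plus_inv)

lemma lam_nz: "lam P j \<noteq> 0" by (simp add: lam_def)

lemma lam_pow: "j < P \<Longrightarrow> lam P j ^ P = 1"
proof -
  assume j: "j < P"
  then have P: "P > 0" by simp
  have "lam P j \<in> (\<lambda>k. cis (2 * pi * real k / real P)) ` {..<P}" using j unfolding lam_def by (rule imageI[OF lessThan_iff[THEN iffD2]])
  then have "lam P j \<in> {z. z ^ P = 1}" using bij_betw_imp_surj_on[OF Complex.bij_betw_roots_unity[OF P]] by (simp only:)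
  then show ?thesis by simp
qed

lemma root_to_j:
  assumes P: "P = Suc (k + k)" and l: "l ^ P = 1"
  shows "\<exists>j \<le> k. - (l + 1 / l) = tj P j"
proof -
  have P0: "P > 0" using P by simp
  have "l \<in> (\<lambda>k. cis (2 * pi * real k / real P)) ` {..<P}"
    using l bij_betw_imp_surj_on[OF Complex.bij_betw_roots_unity[OF P0]] by auto
  then obtain j where j: "j < P" "l = lam P j" unfolding lam_def by auto
  show ?thesis
  proof (cases "j \<le> k")
    case True then show ?thesis using j lam_tr by blast
  next
    case False
    define j' where "j' = P - j"
    have j'k: "j' \<le> k" using False j P unfolding j'_def by simp
    have "2 * pi * real j' / real P = 2 * pi - 2 * pi * real j / real P"
      using j P0 unfolding j'_def by (simp add: of_nat_diff diff_divide_distrib right_diff_distrib)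
    then have "tj P j' = tj P j" unfolding tj_def by simp
    then show ?thesis using j j'k lam_tr by metis
  qed
qed

lemma ang_range: "P = Suc (k + k) \<Longrightarrow> j \<le> k \<Longrightarrow> 0 \<le> 2 * pi * real j / real P \<and> 2 * pi * real j / real P < pi"
proof -
  assume P: "P = Suc (k + k)" and j: "j \<le> k"
  have "2 * real j < real P" using P j by simp
  then have "pi * (2 * real j) < pi * real P" using pi_gt_zero by (rule mult_strict_left_mono)
  then have "2 * pi * real j < pi * real P" by (simp only: mult.assoc mult.left_commute)
  moreover have "real P > 0" using P by simp
  ultimately show ?thesis by (simp add: pos_divide_less_eq)
qed

lemma tj_inj: "P = Suc (k + k) \<Longrightarrow> i \<le> k \<Longrightarrow> j \<le> k \<Longrightarrow> tj P i = tj P j \<Longrightarrow> i = j"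
proof -
  assume P: "P = Suc (k + k)" and i: "i \<le> k" and j: "j \<le> k" and e: "tj P i = tj P j"
  have "cos (2 * pi * real i / real P) = cos (2 * pi * real j / real P)"
    using e unfolding tj_def by simp
  then have "2 * pi * real i / real P = 2 * pi * real j / real P"
    using ang_range[OF P i] ang_range[OF P j] cos_inj_pi less_imp_le by meson
  then have "2 * pi * real i = 2 * pi * real j" using P by (simp only: divide_cancel_right) simp
  then show "i = j" by simp
qed

lemma tj0: "tj P 0 = -2" by (simp add: tj_def)

lemma tj_ne:
  assumes P: "P = Suc (k + k)" and j: "1 \<le> j" "j \<le> k"
  shows "tj P j \<noteq> -2 \<and> tj P j \<noteq> 2"
proof -
  define x where "x = 2 * pi * real j / real P"
  have r: "0 \<le> x" "x < pi" using ang_range[OF P j(2)] unfolding x_def by auto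
  have x0: "x \<noteq> 0" using j P unfolding x_def by simp
  have c1: "cos x \<noteq> 1"
  proof
    assume "cos x = 1"
    then have "cos x = cos 0" by simp
    then have "x = 0" using r cos_inj_pi[of x 0] less_imp_le pi_ge_zero order_refl by meson
    then show False using x0 by simp
  qed
  have c2: "cos x \<noteq> -1"
  proof
    assume "cos x = -1"
    then have "cos x = cos pi" by simp
    then have "x = pi" using r cos_inj_pi[of x pi] less_imp_le pi_ge_zero order_refl by meson
    then show False using r by simp
  qed
  show ?thesis using c1 c2 unfolding tj_def x_def[symmetric]
    by (auto simp: complex_eq_iff)
qed


lemma word_single: "word_eval X1 X2 [(False, False)] = X1" "word_eval X1 X2 [(True, False)] = X2"
  by (simp_all add: letter_mat_def)

lemma char_x1: "character X1 X2 [(False, False)] = trace X1"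
  by (simp add: character_def letter_mat_def)

lemma char_x1x2: "character X1 X2 [(False, False), (True, False)] = trace (X1 ** X2)"
  by (simp add: character_def letter_mat_def)

lemma in_image: "word_eval X1 X2 u \<in> rep_image X1 X2"
  by (simp add: rep_image_def)

lemma abel_eq:
  assumes r: "is_rep p q X1 X2" and a: "abelian_rep X1 X2"
  shows "X1 = X2"
proof -
  define W where "W = word_eval X1 X2 (rel_word p q)"
  have d: "det X1 = 1" "det X2 = 1" using r by (auto simp: is_rep_def SL2_def)
  have dW: "det W = 1" unfolding W_def using det_word d by blast
  have rel: "W ** X1 = X2 ** W" using r by (simp add: is_rep_def W_def)
  have "W ** X1 = X1 ** W" using a in_image[of X1 X2 "rel_word p q"] in_image[of X1 X2 "[(False, False)]"]
    unfolding abelian_rep_def W_def word_single by blast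
  then have e: "X1 ** W = X2 ** W" using rel by simp
  have "X1 = (X1 ** W) ** sl2_inv W" by (simp add: matrix_mul_assoc[symmetric] inv_right dW)
  also have "\<dots> = X2" using e by (simp add: matrix_mul_assoc[symmetric] inv_right dW)
  finally show ?thesis .
qed

definition S4 :: "cmat set" where
  "S4 = {mk 1 0 0 1, mk 0 1 (-1) 0, mk (-1) 0 0 (-1), mk 0 (-1) 1 0}"

lemma word_X0: "word_eval X0 X0 u \<in> S4"
proof (induction u)
  case Nil then show ?case by (simp add: S4_def mk_one)
next
  case (Cons l u)
  have "letter_mat X0 X0 l \<in> {mk 0 1 (-1) 0, mk 0 (-1) 1 0}"
    by (simp add: letter_mat_def Let_def X0_def)
  then show ?case using Cons by (auto simp: S4_def)
qed

lemma abel_can: "abelian_rep X0 X0"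
proof -
  have "a ** b = b ** a" if "a \<in> S4" "b \<in> S4" for a b
    using that by (auto simp: S4_def)
  then show ?thesis unfolding abelian_rep_def rep_image_def using word_X0 by auto
qed

definition monom :: "cmat \<Rightarrow> bool" where
  "monom M \<longleftrightarrow> (M$1$2 = 0 \<and> M$2$1 = 0) \<or> (M$1$1 = 0 \<and> M$2$2 = 0)"

lemma monom_mk: "monom M \<longleftrightarrow> (\<exists>a d. M = mk a 0 0 d) \<or> (\<exists>b c. M = mk 0 b c 0)"
proof -
  obtain a b c d where M: "M = mk a b c d" by (rule mk_cases)
  show ?thesis unfolding M monom_def by auto
qed

lemma monom_mult: "monom A \<Longrightarrow> monom B \<Longrightarrow> monom (A ** B)"
  unfolding monom_mk by auto

lemma monom_inv: "monom A \<Longrightarrow> monom (sl2_inv A)"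
  unfolding monom_mk by auto

lemma monom_word: "monom X1 \<Longrightarrow> monom X2 \<Longrightarrow> monom (word_eval X1 X2 u)"
proof (induction u)
  case Nil then show ?case by (simp add: monom_def mat_def)
next
  case (Cons l u)
  have "monom (letter_mat X1 X2 l)" using Cons.prems monom_inv by (simp add: letter_mat_def Let_def)
  then show ?case using Cons monom_mult by simp
qed

lemma comm_diag: "monom a \<Longrightarrow> monom b \<Longrightarrow> \<exists>x y. comm a b = mk x 0 0 y"
  unfolding monom_mk comm_def by auto

lemma met_monom: "monom X1 \<Longrightarrow> monom X2 \<Longrightarrow> metabelian_rep X1 X2"
proof -
  assume m: "monom X1" "monom X2"
  have "comm a b ** comm c d = comm c d ** comm a b" if ma: "monom a" and mb: "monom b" and mc: "monom c" and md: "monom d" for a b c d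
  proof -
    obtain x y where 1: "comm a b = mk x 0 0 y" using comm_diag[OF ma mb] by blast
    obtain x' y' where 2: "comm c d = mk x' 0 0 y'" using comm_diag[OF mc md] by blast
    show ?thesis unfolding 1 2 by (simp add: mult.commute)
  qed
  then show ?thesis unfolding metabelian_rep_def rep_image_def using monom_word[OF m] by auto
qed

lemma met_can: "metabelian_rep X0 (Yl l)"
  by (rule met_monom) (auto simp: monom_def X0_def Yl_def)

lemma irr_can:
  assumes l0: "l \<noteq> 0" and l2: "l ^ 2 \<noteq> 1"
  shows "irreducible_rep X0 (Yl l)"
  unfolding irreducible_rep_def
proof
  assume "\<exists>v::complex^2. v \<noteq> 0 \<and> (\<forall>g\<in>rep_image X0 (Yl l). \<exists>c. g *v v = c *s v)"
  then obtain v :: "complex^2" where v0: "v \<noteq> 0" and h: "\<forall>g\<in>rep_image X0 (Yl l). \<exists>c. g *v v = c *s v" by blast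
  obtain c where c: "X0 *v v = c *s v" using h in_image[of X0 "Yl l" "[(False, False)]"] unfolding word_single by blast
  obtain d where d: "Yl l *v v = d *s v" using h in_image[of X0 "Yl l" "[(True, False)]"] unfolding word_single by blast
  define a b where "a = v $ 1" and "b = v $ 2"
  have ab: "a \<noteq> 0 \<or> b \<noteq> 0" using v0 unfolding a_def b_def by (auto simp: vec_eq_iff forall_2)
  have e1: "b = c * a" "- a = c * b" using c unfolding a_def b_def X0_def by (auto simp: vec_eq_iff forall_2)
  have e2: "l * b = d * a" "- (1 / l) * a = d * b" using d unfolding a_def b_def Yl_def by (auto simp: vec_eq_iff forall_2)
  have a0: "a \<noteq> 0" using ab e1 by auto
  have cc: "c * c = -1"
  proof -
    have "- a = (c * c) * a" using e1 by (simp add: mult.assoc)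
    then show ?thesis using a0 by (metis mult_minus1 mult_right_cancel)
  qed
  have dd: "d = l * c"
  proof -
    have "d * a = l * b" using e2(1) by simp
    also have "\<dots> = (l * c) * a" using e1(1) by (simp add: mult.assoc)
    finally show ?thesis using a0 by simp
  qed
  have "- (1 / l) * a = (l * (c * c)) * a" using e1 e2 dd by (simp add: mult.assoc mult.left_commute)
  then have "(1 / l) * a = l * a" using cc by simp
  then have "1 / l = l" using a0 by (simp only: mult_cancel_right) simp
  then have "l * l = 1" using l0 by (metis nonzero_divide_eq_eq)
  then show False using l2 by (simp add: power2_eq_square)
qed


lemma sum0: "x + y = (0::complex) \<Longrightarrow> y = - x \<and> x = - y"
  by (metis add.inverse_unique add.commute)

lemma kern_scalar:
  fixes p q r s v1 v2 w1 w2 :: complex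
  assumes "(p+1) * v1 + q * v2 = 0" "r * v1 + (s+1) * v2 = 0"
    "(p+1) * w1 + q * w2 = 0" "r * w1 + (s+1) * w2 = 0"
    "\<not> (p + 1 = 0 \<and> q = 0 \<and> r = 0 \<and> s + 1 = 0)"
  shows "v1 * w2 - v2 * w1 = 0"
proof -
  define D where "D = v1 * w2 - v2 * w1"
  have a1: "q * v2 = - ((p+1) * v1)" "(p+1) * v1 = - (q * v2)" using sum0[OF assms(1)] by blast+
  have a2: "(s+1) * v2 = - (r * v1)" "r * v1 = - ((s+1) * v2)" using sum0[OF assms(2)] by blast+
  have a3: "q * w2 = - ((p+1) * w1)" "(p+1) * w1 = - (q * w2)" using sum0[OF assms(3)] by blast+
  have a4: "(s+1) * w2 = - (r * w1)" "r * w1 = - ((s+1) * w2)" using sum0[OF assms(4)] by blast+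
  have "q * D = v1 * (q * w2) - w1 * (q * v2)" unfolding D_def by (simp add: algebra_simps)
  also have "\<dots> = v1 * (- ((p+1) * w1)) - w1 * (- ((p+1) * v1))" by (simp only: a1(1) a3(1))
  finally have 1: "q * D = 0" by (simp add: algebra_simps)
  have "(p+1) * D = w2 * ((p+1) * v1) - v2 * ((p+1) * w1)" unfolding D_def by (simp add: algebra_simps)
  also have "\<dots> = w2 * (- (q * v2)) - v2 * (- (q * w2))" by (simp only: a1(2) a3(2))
  finally have 2: "(p+1) * D = 0" by (simp add: algebra_simps)
  have "r * D = w2 * (r * v1) - v2 * (r * w1)" unfolding D_def by (simp add: algebra_simps)
  also have "\<dots> = w2 * (- ((s+1) * v2)) - v2 * (- ((s+1) * w2))" by (simp only: a2(2) a4(2))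
  finally have 3: "r * D = 0" by (simp add: algebra_simps)
  have "(s+1) * D = v1 * ((s+1) * w2) - w1 * ((s+1) * v2)" unfolding D_def by (simp add: algebra_simps)
  also have "\<dots> = v1 * (- (r * w1)) - w1 * (- (r * v1))" by (simp only: a2(1) a4(1))
  finally have 4: "(s+1) * D = 0" by (simp add: algebra_simps)
  show ?thesis using 1 2 3 4 assms(5) unfolding D_def[symmetric] by auto
qed

definition vec2 :: "complex \<Rightarrow> complex \<Rightarrow> complex^2" where
  "vec2 a b = (\<chi> i. if i = 1 then a else b)"

lemma vec2_nth[simp]: "vec2 a b $ 1 = a" "vec2 a b $ 2 = b"
  by (auto simp: vec2_def)

lemma vec_eq2: "(v::complex^2) = w \<longleftrightarrow> v $ 1 = w $ 1 \<and> v $ 2 = w $ 2"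
  by (simp add: vec_eq_iff forall_2)

lemma mv_smult: "(A::cmat) *v (c *s v) = c *s (A *v v)"
  by (cases A rule: mk_cases) (simp add: vec_eq2 algebra_simps)

lemma mv_neg: "(- (A::cmat)) *v v = - (A *v v)" "(A::cmat) *v (- v) = - (A *v v)"
  by (cases A rule: mk_cases; simp add: vec_eq2 algebra_simps)+

lemma negeig:
  assumes "det (B::cmat) = 1" "trace B = -2" "B \<noteq> - mat 1"
  shows "\<exists>v. v \<noteq> 0 \<and> B *v v = - v"
proof -
  obtain p q r s where B: "B = mk p q r s" by (rule mk_cases)
  have s: "s = -2 - p" using assms(2) B by (simp add: eq_diff_eq add.commute)
  have d: "p * s - q * r = 1" using assms(1) B by simp
  show ?thesis
  proof (cases "q \<noteq> 0 \<or> p + 1 \<noteq> 0")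
    case True
    define v where "v = vec2 q (- (p + 1))"
    have v0: "v \<noteq> 0"
    proof
      assume v: "v = 0"
      have "v $ 1 = 0" "v $ 2 = 0" using v by simp_all
      then have "q = 0" "- (p + 1) = 0" unfolding v_def by simp_all
      then show False using True by (simp only: neg_equal_0_iff_equal) blast
    qed
    have "r * q - s * (p + 1) = p + 1"
    proof -
      have "r * q - s * (p + 1) = - (p * s - q * r) - s" by (simp add: algebra_simps)
      also have "\<dots> = p + 1" using d s by simp
      finally show ?thesis .
    qed
    then have "B *v v = - v" using B by (simp add: v_def vec_eq2 algebra_simps)
    then show ?thesis using v0 by blast
  next
    case False
    then have "q = 0" "p + 1 = 0" by blast+
    then have pq: "q = 0" "p = -1" using sum0[of p 1] by blast+
    define v where "v = vec2 0 1"
    have "s = -1" using s pq by simp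
    then have "B *v v = - v" using B pq by (simp add: v_def vec_eq2)
    moreover have "v \<noteq> 0" by (auto simp: v_def vec_eq2)
    ultimately show ?thesis by blast
  qed
qed

lemma kern:
  assumes "(B::cmat) \<noteq> - mat 1" "B *v v = - v" "B *v w = - w" "v \<noteq> 0"
  shows "\<exists>c. w = c *s v"
proof -
  obtain p q r s where B: "B = mk p q r s" by (rule mk_cases)
  define v1 v2 w1 w2 where "v1 = v $ 1" "v2 = v $ 2" "w1 = w $ 1" "w2 = w $ 2"
  have e: "(p+1) * v1 + q * v2 = 0" "r * v1 + (s+1) * v2 = 0"
    "(p+1) * w1 + q * w2 = 0" "r * w1 + (s+1) * w2 = 0"
    using assms(2,3) B unfolding v1_v2_w1_w2_def by (simp_all add: vec_eq2 algebra_simps eq_neg_iff_add_eq_0)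
  have ne: "\<not> (p + 1 = 0 \<and> q = 0 \<and> r = 0 \<and> s + 1 = 0)"
  proof
    assume "p + 1 = 0 \<and> q = 0 \<and> r = 0 \<and> s + 1 = 0"
    then have "p = -1" "q = 0" "r = 0" "s = -1" by (auto simp: add_eq_0_iff2)
    then show False using assms(1) B by (simp add: mk_one)
  qed
  have D: "v1 * w2 - v2 * w1 = 0" by (rule kern_scalar[OF e ne])
  have v12: "v1 \<noteq> 0 \<or> v2 \<noteq> 0" using assms(4) unfolding v1_v2_w1_w2_def by (auto simp: vec_eq2)
  show ?thesis
  proof (cases "v1 = 0")
    case False
    have "w2 = (w1 / v1) * v2" using D False by (simp add: field_simps)
    moreover have "w1 = (w1 / v1) * v1" using False by simp
    ultimately have "w = (w1 / v1) *s v" unfolding v1_v2_w1_w2_def by (simp add: vec_eq2)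
    then show ?thesis by blast
  next
    case True
    then have v2: "v2 \<noteq> 0" using v12 by simp
    then have "w1 = 0" using D True by simp
    then have "w = (w2 / v2) *s v" using True v2 unfolding v1_v2_w1_w2_def by (simp add: vec_eq2)
    then show ?thesis by blast
  qed
qed

lemma eigvec_tz:
  assumes "det (X::cmat) = 1" "trace X = 0"
  shows "\<exists>v a. v \<noteq> 0 \<and> X *v v = a *s v"
proof -
  obtain a b c d where X: "X = mk a b c d" by (rule mk_cases)
  have d: "d = - a" using assms X by (simp add: eq_neg_iff_add_eq_0 add.commute)
  have "- (a * a) = 1 + b * c" using assms(1) X d by (simp add: algebra_simps)
  then have e: "a * a + b * c = -1" by (metis add_minus_cancel add.commute)
  show ?thesis
  proof (cases "b = 0")
    case False
    define v where "v = vec2 b (\<i> - a)"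
    have v0: "v \<noteq> 0" using False by (auto simp: v_def vec_eq2)
    have 1: "a * b + b * (\<i> - a) = \<i> * b" by (simp add: algebra_simps)
    have "c * b + d * (\<i> - a) = (a * a + b * c) - a * \<i>" using d by (simp add: algebra_simps)
    also have "\<dots> = \<i> * (\<i> - a)" using e by (simp add: algebra_simps)
    finally have 2: "c * b + d * (\<i> - a) = \<i> * (\<i> - a)" .
    have "X *v v = \<i> *s v" using X 1 2 by (simp add: v_def vec_eq2)
    then show ?thesis using v0 by blast
  next
    case True
    define v where "v = vec2 0 1"
    have "X *v v = (- a) *s v" using X True d by (simp add: v_def vec_eq2)
    moreover have "v \<noteq> 0" by (auto simp: v_def vec_eq2)
    ultimately show ?thesis by blast
  qed
qed

context tz
begin

lemma eig_words:
  assumes a: "X *v v = a *s v" and b: "Y *v v = b *s v"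
  shows "\<exists>c. word_eval X Y u *v v = c *s v"
proof (induction u)
  case Nil then show ?case by (rule exI[of _ 1]) simp
next
  case (Cons l u)
  then obtain c where c: "word_eval X Y u *v v = c *s v" by blast
  obtain g e where l: "l = (g, e)" by (cases l)
  obtain x where x: "(if g then Y else X) *v v = x *s v" using a b by (cases g) auto
  have "word_eval X Y (l # u) *v v = sg e (if g then Y else X) *v (word_eval X Y u *v v)"
    by (simp add: l letter_tz matrix_vector_mul_assoc)
  also have "\<dots> = c *s (sg e (if g then Y else X) *v v)" by (simp add: c mv_smult)
  also have "\<dots> = (c * (if e then - x else x)) *s v"
    using x by (cases e) (simp_all add: sg_def mv_neg vector_smult_assoc vector_smult_rneg vector_smult_lneg)
  finally show ?case by blast
qed

lemma common_eig:
  assumes t: "trace B = -2"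
  shows "\<exists>v a b. v \<noteq> 0 \<and> X *v v = a *s v \<and> Y *v v = b *s v"
proof (cases "B = - mat 1")
  case True
  have "- Y = X ** B" using XB by simp
  also have "\<dots> = - X" using True by simp
  finally have "Y = X" by simp
  then show ?thesis using eigvec_tz[OF dX tX] by blast
next
  case False
  obtain v where v0: "v \<noteq> 0" and Bv: "B *v v = - v" using negeig[OF dB t False] by blast
  have "v = (C ** B) *v v" by (simp add: CB)
  also have "\<dots> = - (C *v v)" by (simp add: matrix_vector_mul_assoc[symmetric] Bv mv_neg)
  finally have Cv: "C *v v = - v" by (metis minus_minus)
  have "B *v (X *v v) = (X ** C) *v v" by (simp add: matrix_vector_mul_assoc XC)
  also have "\<dots> = - (X *v v)" by (simp add: matrix_vector_mul_assoc[symmetric] Cv mv_neg)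
  finally have BXv: "B *v (X *v v) = - (X *v v)" .
  obtain a where a: "X *v v = a *s v" using kern[OF False Bv BXv v0] by blast
  have "Y *v v = - ((X ** B) *v v)" by (simp add: XB mv_neg)
  also have "\<dots> = X *v v" by (simp add: matrix_vector_mul_assoc[symmetric] Bv mv_neg)
  finally have "Y *v v = a *s v" using a by simp
  then show ?thesis using a v0 by blast
qed

lemma irr_t: "irreducible_rep X Y \<Longrightarrow> trace (X ** Y) \<noteq> -2"
proof
  assume irr: "irreducible_rep X Y" and t: "trace (X ** Y) = -2"
  obtain v a b where v: "v \<noteq> 0" "X *v v = a *s v" "Y *v v = b *s v"
    using common_eig t unfolding B_def by blast
  have "\<forall>g\<in>rep_image X Y. \<exists>c. g *v v = c *s v"
    unfolding rep_image_def using eig_words[OF v(2,3)] by blast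
  then show False using irr v(1) unfolding irreducible_rep_def by blast
qed

end


lemma S0_mem: "x \<in> S0 p q \<longleftrightarrow> (\<exists>X1 X2. x = character X1 X2 \<and> is_rep p q X1 X2 \<and> trace X1 = 0)"
  by (auto simp: S0_def)

lemma S0_x1: "x \<in> S0 p q \<Longrightarrow> x [(False, False)] = 0"
  by (auto simp: S0_mem char_x1)

lemma rep_tz: "is_rep p q X1 X2 \<Longrightarrow> trace X1 = 0 \<Longrightarrow> tz X1 X2"
  using is_rep_trace[of p q X1 X2] by unfold_locales (auto simp: is_rep_def SL2_def)

theorem mainTheorem3:
  fixes p q :: int
  assumes "odd p" and "odd q" and "coprime p q" and "p > \<bar>q\<bar>" and "\<bar>q\<bar> > 0"
  shows "finite (S0 p q)
    \<and> card {ch \<in> S0 p q. \<exists>X1 X2. is_rep p q X1 X2 \<and> abelian_rep X1 X2 \<and> ch = character X1 X2} = 1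
    \<and> card {ch \<in> S0 p q. \<exists>X1 X2. is_rep p q X1 X2 \<and> irreducible_rep X1 X2
              \<and> metabelian_rep X1 X2 \<and> ch = character X1 X2} = nat ((p - 1) div 2)
    \<and> S0 p q = {ch \<in> S0 p q. \<exists>X1 X2. is_rep p q X1 X2 \<and> abelian_rep X1 X2 \<and> ch = character X1 X2}
               \<union> {ch \<in> S0 p q. \<exists>X1 X2. is_rep p q X1 X2 \<and> irreducible_rep X1 X2
                   \<and> metabelian_rep X1 X2 \<and> ch = character X1 X2}
    \<and> card (S0 p q) = nat ((p - 1) div 2) + 1"
proof -
  have p1: "p \<ge> 1" using assms(4,5) by simp
  define P where "P = nat p"
  define k where "k = nat ((p - 1) div 2)"
  have Pk: "P = Suc (k + k)" using assms(1) p1 unfolding P_def k_def by (auto elim!: oddE)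
  have oP: "odd P" using Pk by simp
  define ch where "ch j = character X0 (Yl (lam P j))" for j
  have tzj: "tz X0 (Yl (lam P j))" for j using tz_can lam_nz by blast
  have trj: "trace (X0 ** Yl (lam P j)) = tj P j" for j using tr_can lam_tr by metis
  have chj: "ch j = chf (tj P j)" for j unfolding ch_def using tz.char_chf[OF tzj] trj by metis
  have repj: "is_rep p q X0 (Yl (lam P j))" if "j \<le> k" for j
  proof -
    have "j < P" using that Pk by simp
    then have "lam P j ^ nat p = 1" using lam_pow unfolding P_def by blast
    then show ?thesis using rep_can[OF assms(1) p1] by blast
  qed
  have trX0: "trace X0 = 0" by (simp add: X0_def)
  have inS0: "ch j \<in> S0 p q" if "j \<le> k" for j
    unfolding S0_mem ch_def using repj[OF that] trX0 by blast
  have F5: "\<exists>j \<le> k. character X1 X2 = ch j \<and> trace (X1 ** X2) = tj P j"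
    if r: "is_rep p q X1 X2" and t: "trace X1 = 0" for X1 X2
  proof -
    interpret tz X1 X2 using rep_tz[OF r t] .
    have "mpow B P = - mat 1" using is_rep_iff[OF assms(1) p1] r unfolding P_def by blast
    then obtain l where l: "l ^ P = 1" "trace B = - (l + 1 / l)" using eig[OF dB _ oP] by blast
    obtain j where j: "j \<le> k" "- (l + 1 / l) = tj P j" using root_to_j[OF Pk l(1)] by blast
    have tB: "trace (X1 ** X2) = tj P j" using l(2) j(2) unfolding B_def by simp
    have "character X1 X2 = ch j" using char_chf tB chj by simp
    then show ?thesis using j(1) tB by blast
  qed
  have S0eq: "S0 p q = ch ` {0..k}"
  proof
    show "S0 p q \<subseteq> ch ` {0..k}"
    proof
      fix x assume "x \<in> S0 p q"
      then obtain X1 X2 where x: "x = character X1 X2" "is_rep p q X1 X2" "trace X1 = 0"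
        unfolding S0_mem by blast
      then obtain j where "j \<le> k" "x = ch j" using F5 by blast
      then show "x \<in> ch ` {0..k}" by auto
    qed
    show "ch ` {0..k} \<subseteq> S0 p q" using inS0 by auto
  qed
  have inj: "inj_on ch {0..k}"
  proof
    fix i j assume ij: "i \<in> {0..k}" "j \<in> {0..k}" "ch i = ch j"
    have "tj P i = tj P j" using ij(3) char_x1x2 trj unfolding ch_def by metis
    then show "i = j" using tj_inj[OF Pk] ij by auto
  qed
  define A where "A = {ch \<in> S0 p q. \<exists>X1 X2. is_rep p q X1 X2 \<and> abelian_rep X1 X2 \<and> ch = character X1 X2}"
  define I where "I = {ch \<in> S0 p q. \<exists>X1 X2. is_rep p q X1 X2 \<and> irreducible_rep X1 X2
                   \<and> metabelian_rep X1 X2 \<and> ch = character X1 X2}"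
  have lam0: "lam P 0 = 1" by (simp add: lam_def)
  have Y1: "Yl 1 = X0" by (simp add: Yl_def X0_def)
  have Aeq: "A = {ch 0}"
  proof
    show "A \<subseteq> {ch 0}"
    proof
      fix x assume "x \<in> A"
      then obtain X1 X2 where x: "x \<in> S0 p q" "is_rep p q X1 X2" "abelian_rep X1 X2" "x = character X1 X2"
        unfolding A_def by blast
      have t: "trace X1 = 0" using S0_x1[OF x(1)] x(4) char_x1 by metis
      have eq: "X1 = X2" using abel_eq[OF x(2,3)] .
      obtain j where j: "j \<le> k" "x = ch j" "trace (X1 ** X2) = tj P j" using F5[OF x(2) t] x(4) by blast
      have "X1 ** X1 = - mat 1" using tz.XX[OF rep_tz[OF x(2) t]] eq by simp
      then have "tj P j = -2" using j(3) eq trace_negI by simp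
      then have "j = 0" using tj_ne[OF Pk, of j] j(1) by (cases "j = 0") auto
      then show "x \<in> {ch 0}" using j by simp
    qed
    have "ch 0 \<in> S0 p q" using inS0 by simp
    moreover have "is_rep p q X0 X0" using repj[of 0] lam0 Y1 by simp
    moreover have "ch 0 = character X0 X0" unfolding ch_def lam0 Y1 ..
    ultimately show "{ch 0} \<subseteq> A" unfolding A_def using abel_can by blast
  qed
  have Ieq: "I = ch ` {1..k}"
  proof
    show "I \<subseteq> ch ` {1..k}"
    proof
      fix x assume "x \<in> I"
      then obtain X1 X2 where x: "x \<in> S0 p q" "is_rep p q X1 X2" "irreducible_rep X1 X2" "x = character X1 X2"
        unfolding I_def by blast
      have t: "trace X1 = 0" using S0_x1[OF x(1)] x(4) char_x1 by metis
      obtain j where j: "j \<le> k" "x = ch j" "trace (X1 ** X2) = tj P j" using F5[OF x(2) t] x(4) by blast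
      have "tj P j \<noteq> -2" using tz.irr_t[OF rep_tz[OF x(2) t] x(3)] j(3) by simp
      then have "j \<noteq> 0" by (metis tj0)
      then show "x \<in> ch ` {1..k}" using j by auto
    qed
    show "ch ` {1..k} \<subseteq> I"
    proof
      fix x assume "x \<in> ch ` {1..k}"
      then obtain j where j: "1 \<le> j" "j \<le> k" "x = ch j" by auto
      have l2: "lam P j ^ 2 \<noteq> 1"
      proof
        assume "lam P j ^ 2 = 1"
        then have "lam P j = 1 \<or> lam P j = -1" by (simp add: power2_eq_1_iff)
        then have "tj P j = -2 \<or> tj P j = 2" using lam_tr[of P j] by auto
        then show False using tj_ne[OF Pk j(1,2)] by blast
      qed
      have "irreducible_rep X0 (Yl (lam P j))" using irr_can[OF lam_nz l2] .
      then show "x \<in> I" unfolding I_def using inS0[OF j(2)] repj[OF j(2)] met_can j(3) ch_def by blast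
    qed
  qed
  have fin: "finite (S0 p q)" using S0eq by simp
  have cS0: "card (S0 p q) = k + 1" using S0eq card_image[OF inj] by simp
  have cA: "card A = 1" using Aeq by simp
  have cI: "card I = k" using Ieq card_image[OF inj_on_subset[OF inj]] by auto
  have U: "S0 p q = A \<union> I"
  proof -
    have "{0..k} = insert 0 {1..k}" by auto
    then show ?thesis using S0eq Aeq Ieq by auto
  qed
  show ?thesis using fin cS0 cA cI U unfolding A_def I_def k_def by simp
qed


end
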